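(* The function $f:(0,\infty)\to\mathbb{R}$, $f(z)=\frac{W(z)}{1+W(z)}$ (which equals $1-T_0(-z)$ where $T_0(z)=1/(1-T(z))$ and $T(z)=\sum_{n\ge1}n^{n-1}z^n/n!$, for small $z$), is a Bernstein function.
   Context: $W$ is the principal branch of Lambert's W function: the solution of $W(z)e^{W(z)}=z$ that is real and positive for $z>0$, with $W(z)=\sum_{n\ge1}(-n)^{n-1}z^n/n!$ near $0$. A $C^\infty$ function $g:(0,\infty)\to\mathbb{R}$ is completely monotonic if $(-1)^ng^{(n)}(z)\ge0$ for all $z>0$ and $n\ge0$; $f$ is a Bernstein function if $f$ is $C^\infty$, $f(z)>0$ for all $z>0$, and $f'$ is completely monotonic. *)

theory Defs
  imports "HOL-Analysis.Analysis"
begin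

text \<open>Principal branch of Lambert's W on the positive reals: for z > 0, W z is the
unique positive real w with w * exp w = z.  (Values for z \<le> 0 are irrelevant here.)\<close>
definition lambertW :: "real \<Rightarrow> real" where
  "lambertW z = (THE w. w > 0 \<and> w * exp w = z)"

definition smooth_pos :: "(real \<Rightarrow> real) \<Rightarrow> bool" where
  "smooth_pos g \<longleftrightarrow> (\<forall>n. \<forall>z>0. ((deriv ^^ n) g) differentiable (at z))"

definition completely_monotonic :: "(real \<Rightarrow> real) \<Rightarrow> bool" where
  "completely_monotonic g \<longleftrightarrow> smooth_pos g \<and>
     (\<forall>n. \<forall>z>0. (-1) ^ n * (deriv ^^ n) g z \<ge> 0)"

definition bernstein :: "(real \<Rightarrow> real) \<Rightarrow> bool" where
  "bernstein f \<longleftrightarrow> smooth_pos f \<and> (\<forall>z>0. f z > 0) \<and> completely_monotonic (deriv f)"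

end

theory Submission
  imports Defs "HOL-Computational_Algebra.Polynomial"
begin

lemma we_mono: "0 < a \<Longrightarrow> a < b \<Longrightarrow> a * exp a < b * exp (b::real)"
  by (intro mult_strict_mono) auto

lemma W_unique: "0 < w \<Longrightarrow> lambertW (w * exp w) = w"
  unfolding lambertW_def
proof (rule the_equality)
  fix v assume "w > 0" "v > 0 \<and> v * exp v = w * exp w"
  then show "v = w" using we_mono[of v w] we_mono[of w v]
    by (metis linorder_neqE_linordered_idom order_less_irrefl)
qed auto

lemma W_prop: assumes "(z::real) > 0" shows "lambertW z > 0" "lambertW z * exp (lambertW z) = z"
proof -
  have "\<exists>w. 0 \<le> w \<and> w \<le> z \<and> w * exp w = z"
  proof (rule IVT)
    show "0 * exp 0 \<le> z" using assms by simp
    have "z * 1 \<le> z * exp z" using assms by (intro mult_left_mono) auto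
    then show "z \<le> z * exp z" by simp
  qed (use assms in \<open>auto intro!: continuous_intros\<close>)
  then obtain w where w: "0 \<le> w" "w * exp w = z" by blast
  with assms have "w > 0" by (cases "w = 0") auto
  with w W_unique show "lambertW z > 0" "lambertW z * exp (lambertW z) = z" by auto
qed

lemma W_cont: assumes "(z::real) > 0" shows "isCont lambertW z"
proof -
  let ?w = "lambertW z"
  have w: "?w > 0" "?w * exp ?w = z" using W_prop assms by auto
  have "isCont lambertW ((\<lambda>w. w * exp w) ?w)"
    by (rule isCont_inverse_function2[where a="?w/2" and b="2*?w"])
       (use w in \<open>auto intro!: W_unique continuous_intros\<close>)
  then show ?thesis using w by simp
qed

lemma W_deriv: assumes "(z::real) > 0"
  shows "(lambertW has_real_derivative exp (- lambertW z) / (1 + lambertW z)) (at z)"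
proof -
  let ?w = "lambertW z"
  have w: "?w > 0" "?w * exp ?w = z" using W_prop assms by auto
  have "(lambertW has_real_derivative inverse (exp ?w + ?w * exp ?w)) (at z)"
  proof (rule DERIV_inverse_function[where f="\<lambda>w. w * exp w" and a=0 and b="z+1"])
    show "((\<lambda>w. w * exp w) has_real_derivative exp ?w + ?w * exp ?w) (at ?w)"
      by (auto intro!: derivative_eq_intros)
    show "exp ?w + ?w * exp ?w \<noteq> 0" using w by (smt (verit) exp_gt_zero mult_pos_pos)
  qed (use assms W_prop W_cont in auto)
  moreover have "inverse (exp ?w + ?w * exp ?w) = exp (- ?w) / (1 + ?w)"
    using w by (simp add: exp_minus field_simps)
  ultimately show ?thesis by simp
qed

definition F :: "nat \<Rightarrow> real poly \<Rightarrow> real \<Rightarrow> real" where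
  "F m p z = exp (- real m * lambertW z) * poly p (1 / (1 + lambertW z))"

definition T :: "nat \<Rightarrow> real poly \<Rightarrow> real poly" where
  "T m p = smult (real m) (pCons 0 p) + monom 1 3 * pderiv p"

lemma F_deriv: assumes "(z::real) > 0"
  shows "(F m p has_real_derivative - F (Suc m) (T m p) z) (at z)"
proof -
  let ?w = "lambertW z"
  let ?W' = "exp (- ?w) / (1 + ?w)"
  have w: "?w > 0" using W_prop assms by auto
  have dW: "(lambertW has_real_derivative ?W') (at z)" using W_deriv assms .
  have d1: "((\<lambda>z. exp (- real m * lambertW z)) has_real_derivative exp (- real m * ?w) * (- real m * ?W')) (at z)"
    by (auto intro!: derivative_eq_intros dW)
  have d2: "((\<lambda>z. 1 / (1 + lambertW z)) has_real_derivative - ?W' / (1 + ?w)^2) (at z)"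
    using w by (auto intro!: derivative_eq_intros dW simp: power2_eq_square)
  have d3: "((\<lambda>z. poly p (1 / (1 + lambertW z))) has_real_derivative
        poly (pderiv p) (1 / (1 + ?w)) * (- ?W' / (1 + ?w)^2)) (at z)"
    using DERIV_chain2[OF poly_DERIV d2] .
  have d: "(F m p has_real_derivative
     exp (- real m * ?w) * (- real m * ?W') * poly p (1 / (1 + ?w)) +
     (poly (pderiv p) (1 / (1 + ?w)) * (- ?W' / (1 + ?w)^2)) * exp (- real m * ?w)) (at z)"
    unfolding F_def[abs_def] by (rule DERIV_mult[OF d1 d3])
  have e: "exp (- real (Suc m) * ?w) = exp (- real m * ?w) * exp (- ?w)"
    by (simp add: algebra_simps flip: exp_add)
  have "exp (- real m * ?w) * (- real m * ?W') * poly p (1 / (1 + ?w)) +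
     (poly (pderiv p) (1 / (1 + ?w)) * (- ?W' / (1 + ?w)^2)) * exp (- real m * ?w)
     = - F (Suc m) (T m p) z"
    unfolding F_def T_def e using w
    by (simp add: poly_monom field_simps power2_eq_square power3_eq_cube)
  with d show ?thesis by simp
qed

definition nonneg :: "real poly \<Rightarrow> bool" where
  "nonneg p \<longleftrightarrow> (\<forall>i. coeff p i \<ge> 0)"

lemma nonneg_T: "nonneg p \<Longrightarrow> nonneg (T m p)"
  unfolding nonneg_def T_def
  by (auto simp: coeff_pCons coeff_monom_mult coeff_pderiv split: nat.split intro!: add_nonneg_nonneg)

lemma nonneg_poly: "nonneg p \<Longrightarrow> u \<ge> 0 \<Longrightarrow> poly p u \<ge> 0"
  unfolding nonneg_def poly_altdef by (auto intro!: sum_nonneg)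

lemma F_nonneg: "nonneg p \<Longrightarrow> z > 0 \<Longrightarrow> F m p z \<ge> 0"
  unfolding F_def using W_prop[of z] by (auto intro!: mult_nonneg_nonneg nonneg_poly)

primrec P :: "nat \<Rightarrow> real poly" where
  "P 0 = monom 1 3"
| "P (Suc n) = T (Suc n) (P n)"

lemma nonneg_P: "nonneg (P n)"
proof (induct n)
  case 0 then show ?case by (auto simp: nonneg_def coeff_monom)
next
  case (Suc n) then show ?case by (simp add: nonneg_T)
qed

definition G :: "nat \<Rightarrow> real \<Rightarrow> real" where
  "G n z = (-1)^n * F (Suc n) (P n) z"

lemma G_deriv: "z > 0 \<Longrightarrow> (G n has_real_derivative G (Suc n) z) (at z)"
  unfolding G_def[abs_def] using DERIV_cmult[OF F_deriv[of z "Suc n" "P n"], of "(-1)^n"]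
  by simp

abbreviation "ff \<equiv> (\<lambda>z. lambertW z / (1 + lambertW z))"

lemma ff_deriv: assumes "z > 0" shows "(ff has_real_derivative G 0 z) (at z)"
proof -
  let ?w = "lambertW z"
  have w: "?w > 0" using W_prop assms by auto
  have "(ff has_real_derivative ((exp (- ?w) / (1 + ?w)) * (1 + ?w) - ?w * (exp (- ?w) / (1 + ?w))) / (1 + ?w)^2) (at z)"
    using w by (auto intro!: derivative_eq_intros W_deriv assms simp: power2_eq_square)
  moreover have "((exp (- ?w) / (1 + ?w)) * (1 + ?w) - ?w * (exp (- ?w) / (1 + ?w))) / (1 + ?w)^2 = G 0 z"
  proof -
    have nz: "1 + ?w \<noteq> 0" using w by simp
    have "(exp (- ?w) / (1 + ?w)) * (1 + ?w) - ?w * (exp (- ?w) / (1 + ?w)) = exp (- ?w) / (1 + ?w)"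
    proof -
      have "(exp (- ?w) / (1 + ?w)) * (1 + ?w) - ?w * (exp (- ?w) / (1 + ?w)) = ((1 + ?w) - ?w) * (exp (- ?w) / (1 + ?w))"
        by (simp only: left_diff_distrib mult.commute)
      then show ?thesis by simp
    qed
    then show ?thesis unfolding G_def F_def using nz
      by (simp add: poly_monom power_divide power2_eq_square power3_eq_cube)
  qed
  ultimately show ?thesis by simp
qed

lemma open_pos: "open {0::real<..}" by simp

lemma main_ind: "\<forall>z>0. (deriv ^^ n) (deriv ff) z = G n z"
proof (induct n)
  case 0
  then show ?case using ff_deriv DERIV_imp_deriv by auto
next
  case (Suc n)
  show ?case
  proof (intro allI impI)
    fix z :: real assume z: "z > 0"
    have ev: "eventually (\<lambda>x. (deriv ^^ n) (deriv ff) x = G n x) (nhds z)"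
      using eventually_nhds_in_open[OF open_pos, of z] z Suc
      by (auto elim!: eventually_mono)
    have "(deriv ^^ Suc n) (deriv ff) z = deriv ((deriv ^^ n) (deriv ff)) z" by simp
    also have "\<dots> = deriv (G n) z" by (rule deriv_cong_ev[OF ev refl])
    also have "\<dots> = G (Suc n) z" using G_deriv[OF z] by (rule DERIV_imp_deriv)
    finally show "(deriv ^^ Suc n) (deriv ff) z = G (Suc n) z" .
  qed
qed

lemma smooth_deriv: "smooth_pos (deriv ff)"
  unfolding smooth_pos_def
proof (intro allI impI)
  fix n and z :: real assume z: "z > 0"
  have "((deriv ^^ n) (deriv ff) has_real_derivative G (Suc n) z) (at z)"
    by (rule has_field_derivative_transform_within_open[OF G_deriv[OF z] open_pos])
       (use z main_ind in auto)
  then show "(deriv ^^ n) (deriv ff) differentiable (at z)"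
    using real_differentiable_def by blast
qed

theorem mainTheorem10:
  shows "bernstein (\<lambda>z. lambertW z / (1 + lambertW z))"
  unfolding bernstein_def completely_monotonic_def
proof (intro conjI allI impI)
  show "smooth_pos ff" unfolding smooth_pos_def
  proof (intro allI impI)
    fix n and z :: real assume z: "z > 0"
    show "(deriv ^^ n) ff differentiable (at z)"
    proof (cases n)
      case 0
      then show ?thesis using ff_deriv[OF z] real_differentiable_def by auto
    next
      case (Suc k)
      then show ?thesis using smooth_deriv z unfolding smooth_pos_def
        by (simp del: funpow.simps add: funpow_Suc_right)
    qed
  qed
  show "smooth_pos (deriv ff)" by (rule smooth_deriv)
  fix z :: real assume z: "z > 0"
  then show "ff z > 0" using W_prop[of z] by simp
next
  fix n and z :: real assume z: "z > 0"
  have "(-1)^n * (deriv ^^ n) (deriv ff) z = F (Suc n) (P n) z"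
    using main_ind z by (simp add: G_def flip: mult.assoc power_mult_distrib)
  then show "0 \<le> (-1)^n * (deriv ^^ n) (deriv ff) z"
    using F_nonneg[OF nonneg_P z] by simp
qed

end
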